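(* At any point during the execution of the Part I procedure, let $B$ be a blossom (node of the search structure $S$) with base $b$, and let $v$ be a vertex of $B$. Then $b$ lies on the canonical path of $v$, and the subpath of the canonical path of $v$ that starts in $b$ and ends in $v$ has length $\mathrm{lcp}(v)-\mathrm{lcp}(b)$.
   Context: Let $G=(V,E)$ be a finite undirected graph with $n$ vertices and $M$ a matching in $G$. A vertex is free if no edge of $M$ is incident to it; for a matched vertex $v$, $\mathit{mate}(v)$ is its partner. An alternating path is a simple path whose edges alternate between $E\setminus M$ and $M$; an augmenting path is an alternating path connecting two distinct free vertices; a shortest augmenting path is called a sap. For a vertex $v$, $\mathrm{Lcp}(v)$ (resp. $\mathrm{Lcp}_{\mathrm{odd}}(v)$) denotes the minimum length of an even-length (resp. odd-length) alternating path in $G$ from a free vertex to $v$ ($\infty$ if none). The Part I procedure maintains a search structure $S$: a forest whose nodes are either single (odd) vertices or blossoms (disjoint vertex sets with a distinguished vertex, the base); each tree is rooted at a blossom containing a free vertex. Vertices in $S$ are labelled even (those in blossoms) or odd; vertices not in $S$ are unlabelled. A vertex is born even/odd according to the label it receives when inserted. The procedure maintains $\mathrm{lcp}(v)$ for even vertices and $\mathrm{lcp}_{\mathrm{odd}}(v)$ for vertices born odd. The blossom nodes currently in $S$ are the maximal blossoms. Phase $0$: every free vertex becomes the root of its own tree as a trivial blossom $\{v\}$ with base $v$, labelled even, $\mathrm{lcp}(v)=0$. Then for $\Delta=1,2,\dots$, phase $\Delta$ does: (i) if $\Delta$ is even, growth steps: while some even vertex $v$ with $\mathrm{lcp}(v)=\Delta-2$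 has a neighbour $x$ not in $S$ (such $x$ is matched), add $x$ as an odd child of the blossom containing $v$ with $\mathrm{lcp}_{\mathrm{odd}}(x)=\Delta-1$, and add $\mathit{mate}(x)$ as a child of $x$, as a trivial even blossom with $\mathrm{lcp}(\mathit{mate}(x))=\Delta$; (ii) bridge steps: while there is a non-matching edge $xy$ with $x,y$ even, lying in different maximal blossoms $B_x,B_y$, and $\mathrm{lcp}(x)+\mathrm{lcp}(y)=2\Delta-2$: if $B_x,B_y$ lie in different trees, the procedure stops ("an augmenting path is found in phase $\Delta$"); otherwise let $B$ be the lowest common ancestor of $B_x$ and $B_y$ in their tree (a blossom). Every odd vertex $z$ on the tree path from $B_x$ to $B$ or from $B_y$ to $B$ becomes even with $\mathrm{lcp}(z)=\mathrm{lcp}(x)+1+\mathrm{lcp}(y)-\mathrm{lcp}_{\mathrm{odd}}(z)$, and $B$ together with all blossoms and odd vertices on both tree paths is merged into one new blossom with the base of $B$ as its base, which takes the place of $B$ in the tree (children of merged nodes become its children); $xy$ is the bridge of the new blossom. Canonical paths: a free root vertex has the trivial path; in a growth step from $v$ to $x$, the canonical path of $x$ is that of $v$ followed by $vx$, and that of $\mathit{mate}(x)$ is that of $x$ followed by $x\,\mathit{mate}(x)$; in a bridge step, for an odd vertex $z$ on the path from $B_y$ to $B$ the new canonical path of $z$ is the canonical path of $x$, then the edge $xy$, then the reversal of the subpath of the canonical path of $y$ from $z$ to $y$ (symmetrically with $x,y$ exchanged for $z$ on the path from $B_x$ to $B$). *)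

theory Defs
  imports Main
begin

definition graph_matching :: "'v set \<Rightarrow> 'v set set \<Rightarrow> 'v set set \<Rightarrow> bool" where
  "graph_matching V E M \<longleftrightarrow> finite V
     \<and> E \<subseteq> {{a, b} | a b. a \<in> V \<and> b \<in> V \<and> a \<noteq> b}
     \<and> M \<subseteq> E
     \<and> (\<forall>e\<in>M. \<forall>f\<in>M. e \<noteq> f \<longrightarrow> e \<inter> f = {})"

definition free_vertex :: "'v set \<Rightarrow> 'v set set \<Rightarrow> 'v \<Rightarrow> bool" where
  "free_vertex V M v \<longleftrightarrow> v \<in> V \<and> (\<forall>e\<in>M. v \<notin> e)"

text \<open>Nodes of the search structure are vertex sets: the maximal blossoms (blos)
  and the singletons of odd vertices. par is the parent map of the forest,
  base the base of a blossom, lcp / lcpo the maintained values lcp and lcp_odd,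
  cp v the canonical path of v (as a vertex list starting in a free vertex and
  ending in v), phase the current phase Delta, bridging tells whether the
  current phase has finished its growth steps and is performing bridge steps.\<close>

record 'v pstate =
  blos :: "'v set set"
  odds :: "'v set"
  par :: "'v set \<Rightarrow> 'v set option"
  base :: "'v set \<Rightarrow> 'v"
  lcp :: "'v \<Rightarrow> int"
  lcpo :: "'v \<Rightarrow> int"
  cp :: "'v \<Rightarrow> 'v list"
  phase :: nat
  bridging :: bool

definition evens :: "('v, 'a) pstate_scheme \<Rightarrow> 'v set" where
  "evens s = \<Union> (blos s)"

definition inS :: "('v, 'a) pstate_scheme \<Rightarrow> 'v \<Rightarrow> bool" where
  "inS s x \<longleftrightarrow> x \<in> evens s \<or> x \<in> odds s"

definition nodes :: "('v, 'a) pstate_scheme \<Rightarrow> 'v set set" where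
  "nodes s = blos s \<union> (\<lambda>z. {z}) ` odds s"

definition anc :: "('v, 'a) pstate_scheme \<Rightarrow> 'v set \<Rightarrow> 'v set \<Rightarrow> bool" where
  "anc s A C \<longleftrightarrow> (A, C) \<in> {(N, P). N \<in> nodes s \<and> par s N = Some P}\<^sup>*"

definition init_state :: "'v set \<Rightarrow> 'v set set \<Rightarrow> 'v pstate" where
  "init_state V M = \<lparr> blos = {{v} | v. free_vertex V M v}, odds = {},
     par = (\<lambda>_. None), base = the_elem, lcp = (\<lambda>_. 0), lcpo = (\<lambda>_. 0),
     cp = (\<lambda>v. [v]), phase = 1, bridging = False \<rparr>"

definition growth_possible :: "'v set set \<Rightarrow> 'v pstate \<Rightarrow> bool" where
  "growth_possible E s \<longleftrightarrow> even (phase s) \<and>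
     (\<exists>v x. v \<in> evens s \<and> lcp s v = int (phase s) - 2 \<and> {v, x} \<in> E \<and> \<not> inS s x)"

definition grow_step :: "'v set set \<Rightarrow> 'v set set \<Rightarrow> 'v pstate \<Rightarrow> 'v pstate \<Rightarrow> bool" where
  "grow_step E M s s' \<longleftrightarrow> (\<exists>v x m Bv.
     \<not> bridging s \<and> even (phase s) \<and> Bv \<in> blos s \<and> v \<in> Bv
     \<and> lcp s v = int (phase s) - 2 \<and> {v, x} \<in> E \<and> \<not> inS s x \<and> {x, m} \<in> M
     \<and> s' = s\<lparr> odds := insert x (odds s), blos := insert {m} (blos s),
               par := (par s)({x} := Some Bv, {m} := Some {x}),
               base := (base s)({m} := m),
               lcpo := (lcpo s)(x := int (phase s) - 1),
               lcp := (lcp s)(m := int (phase s)),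
               cp := (cp s)(x := cp s v @ [x], m := cp s v @ [x, m]) \<rparr>)"

definition bridge_edge :: "'v set set \<Rightarrow> 'v set set \<Rightarrow> 'v pstate \<Rightarrow> 'v \<Rightarrow> 'v \<Rightarrow> 'v set \<Rightarrow> 'v set \<Rightarrow> bool" where
  "bridge_edge E M s x y Bx By \<longleftrightarrow> {x, y} \<in> E \<and> {x, y} \<notin> M
     \<and> Bx \<in> blos s \<and> By \<in> blos s \<and> x \<in> Bx \<and> y \<in> By \<and> Bx \<noteq> By
     \<and> lcp s x + lcp s y = 2 * int (phase s) - 2"

definition merge :: "'v pstate \<Rightarrow> 'v \<Rightarrow> 'v \<Rightarrow> 'v set \<Rightarrow> 'v set \<Rightarrow> 'v set \<Rightarrow> 'v pstate" where
  "merge s x y Bx By B =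
    (let Px = {N. anc s Bx N \<and> anc s N B};
         Py = {N. anc s By N \<and> anc s N B};
         Q = Px \<union> Py;
         B' = \<Union> Q;
         Zx = {z \<in> odds s. {z} \<in> Px};
         Zy = {z \<in> odds s. {z} \<in> Py};
         Z = Zx \<union> Zy
     in s\<lparr> blos := insert B' (blos s - Q),
           odds := odds s - Z,
           par := (\<lambda>N. if N = B' then par s B
                       else if N \<in> Q then None
                       else map_option (\<lambda>P. if P \<in> Q then B' else P) (par s N)),
           base := (base s)(B' := base s B),
           lcp := (\<lambda>z. if z \<in> Z then lcp s x + 1 + lcp s y - lcpo s z else lcp s z),
           cp := (\<lambda>z. if z \<in> Zy then cp s x @ rev (dropWhile (\<lambda>w. w \<noteq> z) (cp s y))
                      else if z \<in> Zx then cp s y @ rev (dropWhile (\<lambda>w. w \<noteq> z) (cp s x))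
                      else cp s z) \<rparr>)"

definition bridge_step :: "'v set set \<Rightarrow> 'v set set \<Rightarrow> 'v pstate \<Rightarrow> 'v pstate \<Rightarrow> bool" where
  "bridge_step E M s s' \<longleftrightarrow> bridging s \<and> (\<exists>x y Bx By B.
     bridge_edge E M s x y Bx By
     \<and> anc s Bx B \<and> anc s By B
     \<and> (\<forall>C. anc s Bx C \<and> anc s By C \<longrightarrow> anc s B C)
     \<and> s' = merge s x y Bx By B)"

text \<open>Phase control: finish growth steps; finish the phase when no bridge edge exists.
  (If only bridge edges between different trees exist, the procedure stops: no step.)\<close>
definition end_growth :: "'v set set \<Rightarrow> 'v pstate \<Rightarrow> 'v pstate \<Rightarrow> bool" where
  "end_growth E s s' \<longleftrightarrow> \<not> bridging s \<and> \<not> growth_possible E s \<and> s' = s\<lparr> bridging := True \<rparr>"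

definition end_phase :: "'v set set \<Rightarrow> 'v set set \<Rightarrow> 'v pstate \<Rightarrow> 'v pstate \<Rightarrow> bool" where
  "end_phase E M s s' \<longleftrightarrow> bridging s \<and> \<not> (\<exists>x y Bx By. bridge_edge E M s x y Bx By)
     \<and> s' = s\<lparr> phase := Suc (phase s), bridging := False \<rparr>"

inductive reach :: "'v set \<Rightarrow> 'v set set \<Rightarrow> 'v set set \<Rightarrow> 'v pstate \<Rightarrow> bool"
  for V E M where
  reach_init: "reach V E M (init_state V M)"
| reach_grow: "reach V E M s \<Longrightarrow> grow_step E M s s' \<Longrightarrow> reach V E M s'"
| reach_bridge: "reach V E M s \<Longrightarrow> bridge_step E M s s' \<Longrightarrow> reach V E M s'"
| reach_end_growth: "reach V E M s \<Longrightarrow> end_growth E s s' \<Longrightarrow> reach V E M s'"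
| reach_end_phase: "reach V E M s \<Longrightarrow> end_phase E M s s' \<Longrightarrow> reach V E M s'"

end

theory Submission
  imports Defs
begin


definition R :: "'v pstate \<Rightarrow> ('v set \<times> 'v set) set" where
  "R s = {(N, P). N \<in> nodes s \<and> par s N = Some P}"

lemma anc_R: "anc s A C \<longleftrightarrow> (A, C) \<in> (R s)\<^sup>*"
  by (simp add: anc_def R_def)

lemma anc_refl: "anc s A A"
  by (simp add: anc_def)

lemma anc_step: "(A, B) \<in> R s \<Longrightarrow> anc s B C \<Longrightarrow> anc s A C"
  unfolding anc_R by (rule converse_rtrancl_into_rtrancl)

definition rep :: "'v pstate \<Rightarrow> 'v set \<Rightarrow> 'v" where
  "rep s N = (if N \<in> blos s then base s N else the_elem N)"

definition J_mate :: "'v set set \<Rightarrow> 'v pstate \<Rightarrow> bool" where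
  "J_mate M s \<longleftrightarrow> (\<forall>a c. {a, c} \<in> M \<longrightarrow> inS s a \<longrightarrow> inS s c)"

definition J_bdisj :: "'v pstate \<Rightarrow> bool" where
  "J_bdisj s \<longleftrightarrow> (\<forall>N\<in>blos s. \<forall>K\<in>blos s. N \<noteq> K \<longrightarrow> N \<inter> K = {})"

definition J_eo :: "'v pstate \<Rightarrow> bool" where
  "J_eo s \<longleftrightarrow> (evens s \<inter> odds s = {})"

definition J_base :: "'v pstate \<Rightarrow> bool" where
  "J_base s \<longleftrightarrow> (\<forall>N\<in>blos s. base s N \<in> N)"

definition J_par :: "'v pstate \<Rightarrow> bool" where
  "J_par s \<longleftrightarrow> (\<forall>N\<in>nodes s. \<forall>P. par s N = Some P \<longrightarrow> P \<in> nodes s)"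

definition J_root :: "'v pstate \<Rightarrow> bool" where
  "J_root s \<longleftrightarrow> (\<forall>N\<in>nodes s. par s N = None \<longrightarrow> cp s (rep s N) = [rep s N])"

definition J_child :: "'v pstate \<Rightarrow> bool" where
  "J_child s \<longleftrightarrow> (\<forall>N\<in>nodes s. \<forall>P. par s N = Some P \<longrightarrow> (\<exists>v\<in>P. cp s (rep s N) = cp s v @ [rep s N]))"

definition J_in :: "'v pstate \<Rightarrow> bool" where
  "J_in s \<longleftrightarrow> (\<forall>N\<in>nodes s. \<forall>u\<in>N. \<exists>r. cp s u = cp s (rep s N) @ r \<and> set r \<subseteq> N)"

definition J_lcp :: "'v pstate \<Rightarrow> bool" where
  "J_lcp s \<longleftrightarrow> (\<forall>u\<in>evens s. lcp s u = int (length (cp s u)) - 1)"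

definition J_lcpo :: "'v pstate \<Rightarrow> bool" where
  "J_lcpo s \<longleftrightarrow> (\<forall>u\<in>odds s. lcpo s u = int (length (cp s u)) - 1)"

definition J_dist :: "'v pstate \<Rightarrow> bool" where
  "J_dist s \<longleftrightarrow> (\<forall>u. inS s u \<longrightarrow> distinct (cp s u) \<and> set (cp s u) \<subseteq> {w. inS s w})"

definition J_uniq :: "'v pstate \<Rightarrow> bool" where
  "J_uniq s \<longleftrightarrow> (\<forall>w\<in>odds s. \<forall>N\<in>nodes s. \<forall>N'\<in>nodes s. par s N = Some {w} \<longrightarrow> par s N' = Some {w} \<longrightarrow> N = N')"

definition pinv :: "'v set set \<Rightarrow> 'v pstate \<Rightarrow> bool" where
  "pinv M s \<longleftrightarrow> J_mate M s \<and> J_bdisj s \<and> J_eo s \<and> J_base s \<and> J_par s \<and> J_root s \<and> J_child s \<and> J_in s \<and> J_lcp s \<and> J_lcpo s \<and> J_dist s \<and> J_uniq s"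

lemma invI: "J_mate M s \<Longrightarrow> J_bdisj s \<Longrightarrow> J_eo s \<Longrightarrow> J_base s \<Longrightarrow> J_par s \<Longrightarrow> J_root s \<Longrightarrow> J_child s \<Longrightarrow> J_in s \<Longrightarrow> J_lcp s \<Longrightarrow> J_lcpo s \<Longrightarrow> J_dist s \<Longrightarrow> J_uniq s \<Longrightarrow> pinv M s"
  by (simp add: pinv_def)

context fixes M :: "'v set set" and s :: "'v pstate" assumes I: "pinv M s"
begin

lemma i_mate: "{a, c} \<in> M \<Longrightarrow> inS s a \<Longrightarrow> inS s c"
  using I unfolding pinv_def J_mate_def by blast
lemma i_bdisj: "N \<in> blos s \<Longrightarrow> K \<in> blos s \<Longrightarrow> N \<noteq> K \<Longrightarrow> N \<inter> K = {}"
  using I unfolding pinv_def J_bdisj_def by blast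
lemma i_eo: "evens s \<inter> odds s = {}"
  using I unfolding pinv_def J_eo_def by blast
lemma i_base: "N \<in> blos s \<Longrightarrow> base s N \<in> N"
  using I unfolding pinv_def J_base_def by blast
lemma i_par: "N \<in> nodes s \<Longrightarrow> par s N = Some P \<Longrightarrow> P \<in> nodes s"
  using I unfolding pinv_def J_par_def by blast
lemma i_root: "N \<in> nodes s \<Longrightarrow> par s N = None \<Longrightarrow> cp s (rep s N) = [rep s N]"
  using I unfolding pinv_def J_root_def by blast
lemma i_child: "N \<in> nodes s \<Longrightarrow> par s N = Some P \<Longrightarrow> \<exists>v\<in>P. cp s (rep s N) = cp s v @ [rep s N]"
  using I unfolding pinv_def J_child_def by blast
lemma i_in: "N \<in> nodes s \<Longrightarrow> u \<in> N \<Longrightarrow> \<exists>r. cp s u = cp s (rep s N) @ r \<and> set r \<subseteq> N"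
  using I unfolding pinv_def J_in_def by blast
lemma i_lcp: "u \<in> evens s \<Longrightarrow> lcp s u = int (length (cp s u)) - 1"
  using I unfolding pinv_def J_lcp_def by blast
lemma i_lcpo: "u \<in> odds s \<Longrightarrow> lcpo s u = int (length (cp s u)) - 1"
  using I unfolding pinv_def J_lcpo_def by blast
lemma i_dist: "inS s u \<Longrightarrow> distinct (cp s u)"
  using I unfolding pinv_def J_dist_def by blast
lemma i_set: "inS s u \<Longrightarrow> set (cp s u) \<subseteq> {w. inS s w}"
  using I unfolding pinv_def J_dist_def by blast
lemma i_uniq: "w \<in> odds s \<Longrightarrow> N \<in> nodes s \<Longrightarrow> N' \<in> nodes s \<Longrightarrow> par s N = Some {w} \<Longrightarrow> par s N' = Some {w} \<Longrightarrow> N = N'"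
  using I unfolding pinv_def J_uniq_def by blast

lemma odd_not_blos: "w \<in> odds s \<Longrightarrow> {w} \<notin> blos s"
  using i_eo by (auto simp: evens_def)

lemma nodes_disj: "N \<in> nodes s \<Longrightarrow> K \<in> nodes s \<Longrightarrow> N \<noteq> K \<Longrightarrow> N \<inter> K = {}"
  using i_bdisj i_eo by (auto simp: nodes_def evens_def)

lemma rep_in: "N \<in> nodes s \<Longrightarrow> rep s N \<in> N"
  using i_base by (auto simp: nodes_def rep_def)

lemma node_ne: "N \<in> nodes s \<Longrightarrow> N \<noteq> {}"
  using rep_in by blast

lemma cp_rep_last: "N \<in> nodes s \<Longrightarrow> \<exists>p. cp s (rep s N) = p @ [rep s N]"
proof (cases "par s N")
  case None
  assume "N \<in> nodes s" then show ?thesis using i_root[OF _ None] by auto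
next
  case (Some P)
  assume "N \<in> nodes s" then show ?thesis using i_child[OF _ Some] by auto
qed

lemma R_nodes: "(N, P) \<in> R s \<Longrightarrow> N \<in> nodes s \<and> P \<in> nodes s \<and> par s N = Some P"
  using i_par by (auto simp: R_def)

lemma R_rank: "(N, P) \<in> R s \<Longrightarrow> length (cp s (rep s P)) < length (cp s (rep s N))"
proof -
  assume "(N, P) \<in> R s"
  then have N: "N \<in> nodes s" and P: "P \<in> nodes s" and p: "par s N = Some P" using R_nodes by auto
  obtain v where v: "v \<in> P" "cp s (rep s N) = cp s v @ [rep s N]" using i_child[OF N p] by auto
  obtain r where "cp s v = cp s (rep s P) @ r" using i_in[OF P v(1)] by auto
  then show ?thesis using v by simp
qed

lemma anc_nodes: "anc s N K \<Longrightarrow> N \<in> nodes s \<Longrightarrow> K \<in> nodes s"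
  unfolding anc_R
  by (induction rule: rtrancl_induct) (auto dest: R_nodes)

lemma trancl_rank: "(N, K) \<in> (R s)\<^sup>+ \<Longrightarrow> length (cp s (rep s K)) < length (cp s (rep s N))"
  by (induction rule: trancl_induct) (auto dest: R_rank)

lemma anc_rank: "anc s N K \<Longrightarrow> length (cp s (rep s K)) \<le> length (cp s (rep s N))"
proof -
  assume "anc s N K"
  then have "N = K \<or> (N, K) \<in> (R s)\<^sup>+" unfolding anc_R rtrancl_eq_or_trancl by blast
  then show ?thesis using trancl_rank[of N K] by (auto intro: less_imp_le)
qed

lemma anc_antisym: "anc s N K \<Longrightarrow> anc s K N \<Longrightarrow> N = K"
proof (rule ccontr)
  assume a: "anc s N K" "anc s K N" "N \<noteq> K"
  then have "(N, K) \<in> (R s)\<^sup>+" unfolding anc_R rtrancl_eq_or_trancl by blast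
  then have "length (cp s (rep s K)) < length (cp s (rep s N))" by (rule trancl_rank)
  moreover have "length (cp s (rep s N)) \<le> length (cp s (rep s K))" using anc_rank a(2) .
  ultimately show False by simp
qed

lemma R_irrefl: "(N, N) \<notin> R s"
  using R_rank by blast

lemma anc_trans: "anc s A B \<Longrightarrow> anc s B C \<Longrightarrow> anc s A C"
  unfolding anc_R by (rule rtrancl_trans)

lemma anc_prefix:
  assumes "anc s N C" "N \<in> nodes s" "u \<in> N"
  shows "\<exists>r. cp s u = cp s (rep s C) @ r \<and> set r \<subseteq> \<Union>{K. anc s N K \<and> anc s K C}"
proof -
  have "(N, C) \<in> (R s)\<^sup>*" using assms(1) by (simp add: anc_R)
  then have "\<forall>u. N \<in> nodes s \<longrightarrow> u \<in> N \<longrightarrow> (\<exists>r. cp s u = cp s (rep s C) @ r \<and> set r \<subseteq> \<Union>{K. anc s N K \<and> anc s K C})"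
  proof (induction rule: converse_rtrancl_induct)
    case base
    show ?case
    proof (intro allI impI)
      fix u assume "C \<in> nodes s" "u \<in> C"
      then obtain r where "cp s u = cp s (rep s C) @ r" "set r \<subseteq> C" using i_in by blast
      moreover have "C \<subseteq> \<Union>{K. anc s C K \<and> anc s K C}" using anc_refl by blast
      ultimately show "\<exists>r. cp s u = cp s (rep s C) @ r \<and> set r \<subseteq> \<Union>{K. anc s C K \<and> anc s K C}" by blast
    qed
  next
    case (step N P)
    show ?case
    proof (intro allI impI)
      fix u assume N: "N \<in> nodes s" and u: "u \<in> N"
      have P: "P \<in> nodes s" and p: "par s N = Some P" using R_nodes[OF step(1)] by auto
      obtain r1 where r1: "cp s u = cp s (rep s N) @ r1" "set r1 \<subseteq> N" using i_in[OF N u] by blast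
      obtain v where v: "v \<in> P" "cp s (rep s N) = cp s v @ [rep s N]" using i_child[OF N p] by auto
      obtain r2 where r2: "cp s v = cp s (rep s C) @ r2" "set r2 \<subseteq> \<Union>{K. anc s P K \<and> anc s K C}"
        using step(3) P v(1) by blast
      have aNP: "anc s N P" using anc_step[OF step(1) anc_refl] .
      have aNC: "anc s N C" using anc_step[OF step(1)] step(2) by (simp add: anc_R)
      have "set r2 \<subseteq> \<Union>{K. anc s N K \<and> anc s K C}" using r2(2) anc_trans[OF aNP] by blast
      moreover have "N \<subseteq> \<Union>{K. anc s N K \<and> anc s K C}" using aNC anc_refl by blast
      moreover have "rep s N \<in> N" using rep_in N by blast
      ultimately have "set (r2 @ [rep s N] @ r1) \<subseteq> \<Union>{K. anc s N K \<and> anc s K C}" using r1(2) by auto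
      moreover have "cp s u = cp s (rep s C) @ (r2 @ [rep s N] @ r1)" using r1 v r2 by simp
      ultimately show "\<exists>r. cp s u = cp s (rep s C) @ r \<and> set r \<subseteq> \<Union>{K. anc s N K \<and> anc s K C}" by blast
    qed
  qed
  then show ?thesis using assms by blast
qed

lemma cp_anc_set:
  assumes "N \<in> nodes s" "u \<in> N"
  shows "set (cp s u) \<subseteq> \<Union>{K. anc s N K}"
proof -
  have "\<forall>N u. N \<in> nodes s \<longrightarrow> u \<in> N \<longrightarrow> length (cp s u) = n \<longrightarrow> set (cp s u) \<subseteq> \<Union>{K. anc s N K}" for n
  proof (induction n rule: less_induct)
    case (less n)
    show ?case
    proof (intro allI impI)
      fix N u assume N: "N \<in> nodes s" and u: "u \<in> N" and len: "length (cp s u) = n"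
      obtain r where r: "cp s u = cp s (rep s N) @ r" "set r \<subseteq> N" using i_in[OF N u] by blast
      have NN: "N \<subseteq> \<Union>{K. anc s N K}" using anc_refl by blast
      show "set (cp s u) \<subseteq> \<Union>{K. anc s N K}"
      proof (cases "par s N")
        case None
        then show ?thesis using i_root[OF N] r NN rep_in[OF N] by auto
      next
        case (Some P)
        obtain v where v: "v \<in> P" "cp s (rep s N) = cp s v @ [rep s N]" using i_child[OF N Some] by auto
        have P: "P \<in> nodes s" using i_par[OF N Some] .
        have "length (cp s v) < n" using len r v by simp
        then have h1: "set (cp s v) \<subseteq> \<Union>{K. anc s P K}" using less P v(1) by simp
        have "(N, P) \<in> R s" using N Some by (simp add: R_def)
        then have aNP: "anc s N P" using anc_step[OF _ anc_refl] by blast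
        have "\<Union>{K. anc s P K} \<subseteq> \<Union>{K. anc s N K}" using anc_trans[OF aNP] by blast
        then have "set (cp s v) \<subseteq> \<Union>{K. anc s N K}" using h1 by (rule_tac subset_trans)
        then show ?thesis using r v NN rep_in[OF N] by auto
      qed
    qed
  qed
  then show ?thesis using assms by blast
qed

lemma lca_blos:
  assumes Bx: "Bx \<in> blos s" and By: "By \<in> blos s" and ne: "Bx \<noteq> By"
    and ax: "anc s Bx B" and ay: "anc s By B"
    and lca: "\<forall>C. anc s Bx C \<and> anc s By C \<longrightarrow> anc s B C"
  shows "B \<in> blos s"
proof (rule ccontr)
  assume nb: "B \<notin> blos s"
  have Bn: "B \<in> nodes s" using anc_nodes[OF ax] Bx by (auto simp: nodes_def)
  then obtain w where w: "w \<in> odds s" "B = {w}" using nb by (auto simp: nodes_def)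
  have "Bx \<noteq> B" using Bx nb by auto
  then have "(Bx, B) \<in> (R s)\<^sup>+" using ax by (simp add: anc_R rtrancl_eq_or_trancl)
  then obtain Cx where Cx: "(Bx, Cx) \<in> (R s)\<^sup>*" "(Cx, B) \<in> R s" by (blast dest: tranclD2)
  have "By \<noteq> B" using By nb by auto
  then have "(By, B) \<in> (R s)\<^sup>+" using ay by (simp add: anc_R rtrancl_eq_or_trancl)
  then obtain Cy where Cy: "(By, Cy) \<in> (R s)\<^sup>*" "(Cy, B) \<in> R s" by (blast dest: tranclD2)
  have "Cx = Cy" using i_uniq[OF w(1)] R_nodes[OF Cx(2)] R_nodes[OF Cy(2)] w(2) by simp
  then have "anc s B Cx" using lca Cx Cy by (simp add: anc_R)
  moreover have "anc s Cx B" using Cx(2) by (simp add: anc_R)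
  ultimately have "Cx = B" using anc_antisym by blast
  then show False using Cx(2) R_irrefl by simp
qed

end



lemma nodes_inS: "N \<in> nodes s \<Longrightarrow> u \<in> N \<Longrightarrow> inS s u"
  by (auto simp: nodes_def inS_def evens_def)

lemma inv_init: "pinv M (init_state V M)"
proof -
  let ?s = "init_state V M"
  have bl: "blos ?s = {{v} | v. free_vertex V M v}" and od: "odds ?s = {}"
    and pa: "par ?s = (\<lambda>_. None)" and ba: "base ?s = the_elem" and cp: "cp ?s = (\<lambda>v. [v])"
    and lc: "lcp ?s = (\<lambda>_. 0)"
    by (simp_all add: init_state_def)
  have nd: "nodes ?s = {{v} | v. free_vertex V M v}" by (simp add: nodes_def bl od)
  have ev: "evens ?s = {v. free_vertex V M v}" by (auto simp: evens_def bl)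
  have iS: "inS ?s u \<longleftrightarrow> free_vertex V M u" for u by (simp add: inS_def ev od)
  have rp: "N \<in> nodes ?s \<Longrightarrow> rep ?s N = the_elem N" for N by (simp add: rep_def nd bl ba)
  show ?thesis
  proof (rule invI)
    show "J_mate M ?s" unfolding J_mate_def iS free_vertex_def by blast
    show "J_bdisj ?s" unfolding J_bdisj_def bl by auto
    show "J_eo ?s" unfolding J_eo_def od by simp
    show "J_base ?s" unfolding J_base_def bl ba by auto
    show "J_par ?s" unfolding J_par_def pa by simp
    show "J_root ?s" unfolding J_root_def using rp by (auto simp: cp nd)
    show "J_child ?s" unfolding J_child_def pa by simp
    show "J_in ?s" unfolding J_in_def using rp by (auto simp: cp nd)
    show "J_lcp ?s" unfolding J_lcp_def by (simp add: lc cp)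
    show "J_lcpo ?s" unfolding J_lcpo_def by (simp add: od)
    show "J_dist ?s" unfolding J_dist_def by (simp add: cp)
    show "J_uniq ?s" unfolding J_uniq_def by (simp add: od)
  qed
qed

lemma inv_cong:
  assumes "pinv M s"
    and "blos s' = blos s" "odds s' = odds s" "par s' = par s" "base s' = base s"
    "lcp s' = lcp s" "lcpo s' = lcpo s" "cp s' = cp s"
  shows "pinv M s'"
proof -
  have n: "nodes s' = nodes s" "evens s' = evens s" "inS s' = inS s" "rep s' = rep s"
    using assms(2-) by (simp_all add: nodes_def evens_def inS_def rep_def fun_eq_iff)
  show ?thesis using assms(1) unfolding pinv_def J_mate_def J_bdisj_def J_eo_def J_base_def J_par_def
      J_root_def J_child_def J_in_def J_lcp_def J_lcpo_def J_dist_def J_uniq_def n assms(2-)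
    by blast
qed

lemma inv_end_growth: "pinv M s \<Longrightarrow> end_growth E s s' \<Longrightarrow> pinv M s'"
  unfolding end_growth_def by (rule inv_cong) auto

lemma inv_end_phase: "pinv M s \<Longrightarrow> end_phase E M s s' \<Longrightarrow> pinv M s'"
  unfolding end_phase_def by (rule inv_cong) auto



lemma inv_grow:
  assumes gm: "graph_matching V E M" and I: "pinv M s" and g: "grow_step E M s s'"
  shows "pinv M s'"
proof -
  from g obtain v x m Bv where Bv: "Bv \<in> blos s" "v \<in> Bv" and vx: "{v, x} \<in> E"
    and nx: "\<not> inS s x" and xm: "{x, m} \<in> M" and lv: "lcp s v = int (phase s) - 2"
    and s': "s' = s\<lparr> odds := insert x (odds s), blos := insert {m} (blos s),
               par := (par s)({x} := Some Bv, {m} := Some {x}),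
               base := (base s)({m} := m),
               lcpo := (lcpo s)(x := int (phase s) - 1),
               lcp := (lcp s)(m := int (phase s)),
               cp := (cp s)(x := cp s v @ [x], m := cp s v @ [x, m]) \<rparr>"
    unfolding grow_step_def by blast
  have Mdisj: "\<And>e f. e \<in> M \<Longrightarrow> f \<in> M \<Longrightarrow> e \<noteq> f \<Longrightarrow> e \<inter> f = {}"
    using gm by (simp add: graph_matching_def)
  have xmE: "{x, m} \<in> {{a, b} | a b. a \<in> V \<and> b \<in> V \<and> a \<noteq> b}"
    using gm xm by (auto simp: graph_matching_def)
  have xnm: "x \<noteq> m"
  proof
    assume "x = m"
    with xmE obtain a b where "{x} = {a, b}" "a \<noteq> b" by auto
    then have "a \<in> {x}" "b \<in> {x}" by (metis insertI1, metis insertI1 insert_commute)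
    then show False using \<open>a \<noteq> b\<close> by simp
  qed
  have nm: "\<not> inS s m"
  proof
    assume "inS s m"
    moreover have "{m, x} \<in> M" using xm by (simp add: insert_commute)
    ultimately show False using i_mate[OF I] nx by blast
  qed
  have vev: "v \<in> evens s" using Bv by (auto simp: evens_def)
  have vS: "inS s v" using vev by (simp add: inS_def)
  have vnx: "v \<noteq> x" "v \<noteq> m" using vS nx nm by auto
  have xnm': "{x} \<noteq> {m}" using xnm by simp
  have bl: "blos s' = insert {m} (blos s)" and od: "odds s' = insert x (odds s)"
    and pa: "\<And>N. par s' N = (if N = {m} then Some {x} else if N = {x} then Some Bv else par s N)"
    and ba: "\<And>N. base s' N = (if N = {m} then m else base s N)"
    and cpe: "\<And>u. cp s' u = (if u = m then cp s v @ [x, m] else if u = x then cp s v @ [x] else cp s u)"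
    and lce: "\<And>u. lcp s' u = (if u = m then int (phase s) else lcp s u)"
    and lco: "\<And>u. lcpo s' u = (if u = x then int (phase s) - 1 else lcpo s u)"
    by (simp_all add: s')
  have ev: "evens s' = insert m (evens s)" by (simp add: evens_def bl)
  have iS: "\<And>u. inS s' u \<longleftrightarrow> inS s u \<or> u = x \<or> u = m" by (auto simp: inS_def ev od)
  have nd: "nodes s' = insert {x} (insert {m} (nodes s))" unfolding nodes_def bl od by blast
  have old: "\<And>N. N \<in> nodes s \<Longrightarrow> N \<noteq> {x} \<and> N \<noteq> {m}" using nodes_inS[of _ s] nx nm by (metis singletonI)
  have xnb: "{x} \<notin> blos s" using nodes_inS[of "{x}" s x] nx by (auto simp: nodes_def)
  have rpo: "\<And>N. N \<in> nodes s \<Longrightarrow> rep s' N = rep s N"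
    using old by (auto simp: rep_def bl ba)
  have rpx: "rep s' {x} = x" using xnm' xnb by (simp add: rep_def bl)
  have rpm: "rep s' {m} = m" by (simp add: rep_def bl ba)
  have cpo: "\<And>u. inS s u \<Longrightarrow> cp s' u = cp s u" using nx nm cpe by auto
  have cpx: "cp s' x = cp s v @ [x]" using cpe xnm by simp
  have cpm: "cp s' m = cp s v @ [x, m]" using cpe by simp
  have cpv: "set (cp s v) \<subseteq> {w. inS s w}" using i_set[OF I vS] .
  have Bvn: "Bv \<in> nodes s" using Bv by (simp add: nodes_def)
  show ?thesis
  proof (rule invI)
    show "J_mate M s'" unfolding J_mate_def
    proof (intro allI impI)
      fix a c assume ac: "{a, c} \<in> M" and a: "inS s' a"
      show "inS s' c"
      proof (cases "inS s a")
        case True then show ?thesis using i_mate[OF I ac] iS by blast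
      next
        case False
        then have "a = x \<or> a = m" using a iS by blast
        then have "{a, c} \<inter> {x, m} \<noteq> {}" by blast
        then have "{a, c} = {x, m}" using Mdisj[OF ac xm] by blast
        then show ?thesis using iS by (metis insertCI doubleton_eq_iff)
      qed
    qed
    show "J_bdisj s'" unfolding J_bdisj_def bl
    proof (intro ballI impI)
      fix N K assume N: "N \<in> insert {m} (blos s)" and K: "K \<in> insert {m} (blos s)" and ne: "N \<noteq> K"
      have mb: "\<And>B. B \<in> blos s \<Longrightarrow> m \<notin> B" using nm by (auto simp: inS_def evens_def)
      show "N \<inter> K = {}" using N K ne i_bdisj[OF I] mb by auto
    qed
    show "J_eo s'" unfolding J_eo_def ev od using i_eo[OF I] xnm nm nx by (auto simp: inS_def)
    show "J_base s'" unfolding J_base_def bl using i_base[OF I] old ba by (auto simp: nodes_def)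
    show "J_par s'" unfolding J_par_def nd using pa old i_par[OF I] Bvn by auto
    show "J_root s'" unfolding J_root_def nd
    proof (intro ballI impI)
      fix N assume N: "N \<in> insert {x} (insert {m} (nodes s))" and p: "par s' N = None"
      then have N': "N \<in> nodes s" using pa by (auto split: if_splits)
      have "par s N = None" using p pa old[OF N'] by simp
      then have "cp s (rep s N) = [rep s N]" using i_root[OF I N'] by simp
      moreover have "inS s (rep s N)" using nodes_inS[OF N' rep_in[OF I N']] .
      ultimately show "cp s' (rep s' N) = [rep s' N]" using rpo[OF N'] cpo by simp
    qed
    show "J_child s'" unfolding J_child_def nd
    proof (intro ballI allI impI)
      fix N P assume N: "N \<in> insert {x} (insert {m} (nodes s))" and p: "par s' N = Some P"
      show "\<exists>v\<in>P. cp s' (rep s' N) = cp s' v @ [rep s' N]"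
      proof (cases "N = {x}")
        case True
        then have "P = Bv" using p pa xnm' by simp
        have "cp s' (rep s' N) = cp s' v @ [rep s' N]" using True rpx cpx cpo[OF vS] by simp
        then show ?thesis using \<open>P = Bv\<close> Bv(2) by blast
      next
        case nx': False
        show ?thesis
        proof (cases "N = {m}")
          case True
          then have "P = {x}" using p pa by simp
          then show ?thesis using True rpm cpm cpx by auto
        next
          case False
          then have N': "N \<in> nodes s" using N nx' by simp
          have "par s N = Some P" using p pa old[OF N'] by simp
          then obtain w where w: "w \<in> P" "cp s (rep s N) = cp s w @ [rep s N]"
            using i_child[OF I N'] by blast
          have "P \<in> nodes s" using i_par[OF I N' \<open>par s N = Some P\<close>] .
          then have "inS s w" using w(1) by (rule nodes_inS)
          moreover have "inS s (rep s N)" using nodes_inS[OF N' rep_in[OF I N']] .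
          ultimately have "cp s' (rep s' N) = cp s' w @ [rep s' N]" using w rpo[OF N'] cpo by simp
          then show ?thesis using w(1) by blast
        qed
      qed
    qed
    show "J_in s'" unfolding J_in_def nd
    proof (intro ballI)
      fix N u assume N: "N \<in> insert {x} (insert {m} (nodes s))" and u: "u \<in> N"
      show "\<exists>r. cp s' u = cp s' (rep s' N) @ r \<and> set r \<subseteq> N"
      proof (cases "N \<in> nodes s")
        case True
        obtain r where r: "cp s u = cp s (rep s N) @ r" "set r \<subseteq> N" using i_in[OF I True u] by blast
        have "inS s u" using nodes_inS[OF True u] .
        moreover have "inS s (rep s N)" using nodes_inS[OF True rep_in[OF I True]] .
        ultimately show ?thesis using r rpo[OF True] cpo by auto
      next
        case False
        then have "N = {x} \<or> N = {m}" using N by simp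
        then show ?thesis using u rpx rpm by auto
      qed
    qed
    show "J_lcp s'" unfolding J_lcp_def ev
    proof
      fix u assume u: "u \<in> insert m (evens s)"
      show "lcp s' u = int (length (cp s' u)) - 1"
      proof (cases "u = m")
        case True
        then show ?thesis using lce cpm i_lcp[OF I vev] lv by simp
      next
        case False
        then have "u \<in> evens s" using u by simp
        moreover then have "inS s u" by (simp add: inS_def)
        ultimately show ?thesis using lce False cpo i_lcp[OF I] by simp
      qed
    qed
    show "J_lcpo s'" unfolding J_lcpo_def od
    proof
      fix u assume u: "u \<in> insert x (odds s)"
      show "lcpo s' u = int (length (cp s' u)) - 1"
      proof (cases "u = x")
        case True
        then show ?thesis using lco cpx i_lcp[OF I vev] lv by simp
      next
        case False
        then have "u \<in> odds s" using u by simp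
        moreover then have "inS s u" by (simp add: inS_def)
        ultimately show ?thesis using lco False cpo i_lcpo[OF I] by simp
      qed
    qed
    show "J_dist s'" unfolding J_dist_def
    proof (intro allI impI)
      fix u assume u: "inS s' u"
      have xv: "x \<notin> set (cp s v)" "m \<notin> set (cp s v)" using cpv nx nm by auto
      have dv: "distinct (cp s v)" using i_dist[OF I vS] .
      show "distinct (cp s' u) \<and> set (cp s' u) \<subseteq> {w. inS s' w}"
      proof (cases "inS s u")
        case True
        then show ?thesis using cpo i_dist[OF I True] i_set[OF I True] iS by auto
      next
        case False
        then have "u = x \<or> u = m" using u iS by blast
        then show ?thesis using cpx cpm xv dv xnm cpv iS by auto
      qed
    qed
    show "J_uniq s'" unfolding J_uniq_def nd od
    proof (intro ballI impI)
      fix w N N' assume w: "w \<in> insert x (odds s)"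
        and N: "N \<in> insert {x} (insert {m} (nodes s))" and N': "N' \<in> insert {x} (insert {m} (nodes s))"
        and p: "par s' N = Some {w}" and p': "par s' N' = Some {w}"
      have Bvw: "Bv \<noteq> {w}"
      proof
        assume "Bv = {w}"
        then have "w \<in> evens s" using Bv by (auto simp: evens_def)
        then show False using w nx i_eo[OF I] by (auto simp: inS_def)
      qed
      have oldp: "\<And>K. K \<in> nodes s \<Longrightarrow> par s' K = Some {w} \<Longrightarrow> par s K = Some {w} \<and> w \<noteq> x"
      proof -
        fix K assume K: "K \<in> nodes s" and pK: "par s' K = Some {w}"
        then have "par s K = Some {w}" using old[OF K] pa by simp
        moreover then have "{w} \<in> nodes s" using i_par[OF I K] by blast
        then have "w \<noteq> x" using nodes_inS[of "{w}" s w] nx by auto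
        ultimately show "par s K = Some {w} \<and> w \<noteq> x" by blast
      qed
      have cN: "N = {m} \<and> w = x \<or> N \<in> nodes s \<and> par s N = Some {w} \<and> w \<noteq> x"
        using N p pa Bvw oldp xnm' by (auto split: if_splits)
      have cN': "N' = {m} \<and> w = x \<or> N' \<in> nodes s \<and> par s N' = Some {w} \<and> w \<noteq> x"
        using N' p' pa Bvw oldp xnm' by (auto split: if_splits)
      show "N = N'"
        using cN cN' w i_uniq[OF I, of w N N'] by auto
    qed
  qed
qed



lemma side:
  assumes I: "pinv M s" and Bx: "Bx \<in> blos s" and By: "By \<in> blos s" and x: "x \<in> Bx" and y: "y \<in> By"
    and ax: "anc s Bx B" and ay: "anc s By B"
    and lca: "\<forall>C. anc s Bx C \<and> anc s By C \<longrightarrow> anc s B C"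
    and Bb: "B \<in> blos s" and z: "z \<in> odds s" and az1: "anc s By {z}" and az2: "anc s {z} B"
  shows "\<exists>r. cp s y = cp s z @ r \<and> dropWhile (\<lambda>w. w \<noteq> z) (cp s y) = z # r
           \<and> distinct (cp s x @ rev (z # r)) \<and> set (z # r) \<subseteq> \<Union>{K. anc s By K \<and> anc s K B}"
proof -
  have zn: "{z} \<in> nodes s" using z by (simp add: nodes_def)
  have zb: "{z} \<notin> blos s" using odd_not_blos[OF I z] .
  have rz: "rep s {z} = z" using zb by (simp add: rep_def)
  have Byn: "By \<in> nodes s" and Bxn: "Bx \<in> nodes s" using Bx By by (simp_all add: nodes_def)
  obtain r where r: "cp s y = cp s z @ r" and rs: "set r \<subseteq> \<Union>{K. anc s By K \<and> anc s K {z}}"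
    using anc_prefix[OF I az1 Byn y] rz by auto
  obtain p where p: "cp s z = p @ [z]" using cp_rep_last[OF I zn] rz by auto
  have yS: "inS s y" using y By by (auto simp: inS_def evens_def)
  have xS: "inS s x" using x Bx by (auto simp: inS_def evens_def)
  have dy: "distinct (p @ z # r)" using i_dist[OF I yS] r p by simp
  then have zp: "z \<notin> set p" and zr: "z \<notin> set r" and dr: "distinct r" by auto
  have dw: "dropWhile (\<lambda>w. w \<noteq> z) (cp s y) = z # r"
  proof -
    have cy: "cp s y = p @ z # r" using r p by simp
    show ?thesis unfolding cy using zp by (subst dropWhile_append2[of p]) auto
  qed
  have S2: "set (z # r) \<subseteq> \<Union>{K. anc s By K \<and> anc s K {z}}"
    using rs az1 anc_refl[of s "{z}"] by auto
  have S3: "\<Union>{K. anc s By K \<and> anc s K {z}} \<subseteq> \<Union>{K. anc s By K \<and> anc s K B}"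
  proof
    fix w assume "w \<in> \<Union>{K. anc s By K \<and> anc s K {z}}"
    then obtain K where "w \<in> K" "anc s By K" "anc s K {z}" by blast
    moreover then have "anc s K B" using anc_trans[OF I _ az2] by blast
    ultimately show "w \<in> \<Union>{K. anc s By K \<and> anc s K B}" by blast
  qed
  have cx: "set (cp s x) \<subseteq> \<Union>{K. anc s Bx K}" using cp_anc_set[OF I Bxn x] .
  have disj: "set (cp s x) \<inter> set (z # r) = {}"
  proof (rule ccontr)
    assume "set (cp s x) \<inter> set (z # r) \<noteq> {}"
    then obtain w where w1: "w \<in> set (cp s x)" and w2: "w \<in> set (z # r)" by blast
    obtain K1 where K1: "w \<in> K1" "anc s Bx K1" using w1 cx by blast
    obtain K2 where K2: "w \<in> K2" "anc s By K2" "anc s K2 {z}" using w2 S2 by blast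
    have K1n: "K1 \<in> nodes s" using anc_nodes[OF I K1(2) Bxn] .
    have K2n: "K2 \<in> nodes s" using anc_nodes[OF I K2(2) Byn] .
    have "K1 = K2" using nodes_disj[OF I K1n K2n] K1(1) K2(1) by blast
    then have "anc s B K1" using lca K1(2) K2(2) by blast
    moreover have "anc s K1 B" using anc_trans[OF I K2(3) az2] \<open>K1 = K2\<close> by simp
    ultimately have "K1 = B" using anc_antisym[OF I] by blast
    then have "anc s B {z}" using K2(3) \<open>K1 = K2\<close> by simp
    then have "B = {z}" using anc_antisym[OF I _ az2] by blast
    then show False using Bb zb by simp
  qed
  have dx: "distinct (cp s x)" using i_dist[OF I xS] .
  have "distinct (cp s x @ rev (z # r))" using dx dr zr disj by auto
  then show ?thesis using r dw S2 S3 by blast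
qed



lemma inv_merge:
  assumes I: "pinv M s" and be: "bridge_edge E M s x y Bx By" and ax: "anc s Bx B" and ay: "anc s By B"
    and lca: "\<forall>C. anc s Bx C \<and> anc s By C \<longrightarrow> anc s B C"
  shows "pinv M (merge s x y Bx By B)"
proof -
  have Bx: "Bx \<in> blos s" and By: "By \<in> blos s" and x: "x \<in> Bx" and y: "y \<in> By" and Bxy: "Bx \<noteq> By"
    using be by (simp_all add: bridge_edge_def)
  have lca': "\<forall>C. anc s By C \<and> anc s Bx C \<longrightarrow> anc s B C" using lca by blast
  define Px where "Px = {N. anc s Bx N \<and> anc s N B}"
  define Py where "Py = {N. anc s By N \<and> anc s N B}"
  define Q where "Q = Px \<union> Py"
  define B' where "B' = \<Union>Q"
  define Zx where "Zx = {z \<in> odds s. {z} \<in> Px}"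
  define Zy where "Zy = {z \<in> odds s. {z} \<in> Py}"
  define Z where "Z = Zx \<union> Zy"
  define s' where "s' = merge s x y Bx By B"
  have s'eq: "s' = s\<lparr> blos := insert B' (blos s - Q),
           odds := odds s - Z,
           par := (\<lambda>N. if N = B' then par s B
                       else if N \<in> Q then None
                       else map_option (\<lambda>P. if P \<in> Q then B' else P) (par s N)),
           base := (base s)(B' := base s B),
           lcp := (\<lambda>z. if z \<in> Z then lcp s x + 1 + lcp s y - lcpo s z else lcp s z),
           cp := (\<lambda>z. if z \<in> Zy then cp s x @ rev (dropWhile (\<lambda>w. w \<noteq> z) (cp s y))
                      else if z \<in> Zx then cp s y @ rev (dropWhile (\<lambda>w. w \<noteq> z) (cp s x))
                      else cp s z) \<rparr>"
    unfolding s'_def merge_def Let_def Px_def Py_def Q_def B'_def Zx_def Zy_def Z_def by simp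
  have bl: "blos s' = insert B' (blos s - Q)" and od: "odds s' = odds s - Z"
    and pa: "\<And>N. par s' N = (if N = B' then par s B else if N \<in> Q then None
                       else map_option (\<lambda>P. if P \<in> Q then B' else P) (par s N))"
    and ba: "\<And>N. base s' N = (if N = B' then base s B else base s N)"
    and lce: "\<And>z. lcp s' z = (if z \<in> Z then lcp s x + 1 + lcp s y - lcpo s z else lcp s z)"
    and lcoe: "lcpo s' = lcpo s"
    and cpe: "\<And>z. cp s' z = (if z \<in> Zy then cp s x @ rev (dropWhile (\<lambda>w. w \<noteq> z) (cp s y))
                      else if z \<in> Zx then cp s y @ rev (dropWhile (\<lambda>w. w \<noteq> z) (cp s x))
                      else cp s z)"
    by (simp_all add: s'eq)
  have Bxn: "Bx \<in> nodes s" and Byn: "By \<in> nodes s" using Bx By by (simp_all add: nodes_def)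
  have Bb: "B \<in> blos s" using lca_blos[OF I Bx By Bxy ax ay lca] .
  have Bn: "B \<in> nodes s" using Bb by (simp add: nodes_def)
  have Qn: "\<And>N. N \<in> Q \<Longrightarrow> N \<in> nodes s"
    unfolding Q_def Px_def Py_def using anc_nodes[OF I _ Bxn] anc_nodes[OF I _ Byn] by blast
  have QB: "\<And>N. N \<in> Q \<Longrightarrow> anc s N B" unfolding Q_def Px_def Py_def by blast
  have BxQ: "Bx \<in> Q" and ByQ: "By \<in> Q" and BQ: "B \<in> Q"
    unfolding Q_def Px_def Py_def using ax ay anc_refl by blast+
  have Zodd: "\<And>z. z \<in> Z \<longleftrightarrow> z \<in> odds s \<and> {z} \<in> Q" unfolding Z_def Zx_def Zy_def Q_def by blast
  have Zsub: "Z \<subseteq> B'" unfolding B'_def using Zodd by blast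
  have ZxZy: "\<And>z. z \<in> Zx \<Longrightarrow> z \<notin> Zy"
  proof
    fix z assume "z \<in> Zx" "z \<in> Zy"
    then have z: "z \<in> odds s" "anc s Bx {z}" "anc s By {z}" "anc s {z} B"
      unfolding Zx_def Zy_def Px_def Py_def by blast+
    then have "anc s B {z}" using lca by blast
    then have "B = {z}" using anc_antisym[OF I _ z(4)] by blast
    then show False using Bb odd_not_blos[OF I z(1)] by simp
  qed
  define b where "b = base s B"
  have bB: "b \<in> B" using i_base[OF I Bb] b_def by simp
  have bev: "b \<in> evens s" using bB Bb by (auto simp: evens_def)
  have bZ: "b \<notin> Z" using bev i_eo[OF I] Zodd by blast
  have rB: "rep s B = b" using Bb b_def by (simp add: rep_def)
  have BB': "B \<subseteq> B'" using BQ B'_def by blast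
  have B'nQ: "B' \<notin> Q"
  proof
    assume B'Q: "B' \<in> Q"
    have B'n: "B' \<in> nodes s" using Qn[OF B'Q] .
    have "Bx = B'"
    proof (rule ccontr)
      assume "Bx \<noteq> B'"
      then have "Bx \<inter> B' = {}" using nodes_disj[OF I Bxn B'n] by blast
      moreover have "Bx \<subseteq> B'" using BxQ B'_def by blast
      ultimately show False using node_ne[OF I Bxn] by blast
    qed
    moreover have "By = B'"
    proof (rule ccontr)
      assume "By \<noteq> B'"
      then have "By \<inter> B' = {}" using nodes_disj[OF I Byn B'n] by blast
      moreover have "By \<subseteq> B'" using ByQ B'_def by blast
      ultimately show False using node_ne[OF I Byn] by blast
    qed
    ultimately show False using Bxy by simp
  qed
  have outQ: "\<And>N. N \<in> nodes s \<Longrightarrow> N \<notin> Q \<Longrightarrow> N \<inter> B' = {}"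
  proof -
    fix N assume N: "N \<in> nodes s" "N \<notin> Q"
    have "\<And>K. K \<in> Q \<Longrightarrow> N \<inter> K = {}"
    proof -
      fix K assume K: "K \<in> Q"
      then have "K \<noteq> N" using N(2) by blast
      then show "N \<inter> K = {}" using nodes_disj[OF I N(1) Qn[OF K]] by blast
    qed
    then show "N \<inter> B' = {}" unfolding B'_def by blast
  qed
  have outQ2: "\<And>N. N \<in> nodes s \<Longrightarrow> N \<notin> Q \<Longrightarrow> N \<noteq> B'"
  proof
    fix N assume N: "N \<in> nodes s" "N \<notin> Q" "N = B'"
    then have "N \<inter> B' = {}" using outQ by blast
    then show False using N(3) node_ne[OF I N(1)] by blast
  qed
  have outZ: "\<And>N u. N \<in> nodes s \<Longrightarrow> N \<notin> Q \<Longrightarrow> u \<in> N \<Longrightarrow> u \<notin> Z"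
    using outQ Zsub by blast
  have ndq: "nodes s' = insert B' (blos s - Q) \<union> (\<lambda>z. {z}) ` (odds s - Z)" by (simp add: nodes_def bl od)
  have img: "(\<lambda>z. {z}) ` (odds s - Z) = (\<lambda>z. {z}) ` odds s - Q" using Zodd by auto
  have ndm: "nodes s - Q = (blos s - Q) \<union> ((\<lambda>z. {z}) ` odds s - Q)" by (auto simp: nodes_def)
  have nd: "nodes s' = insert B' (nodes s - Q)" unfolding ndq img ndm by blast
  have evs: "evens s' = evens s \<union> Z"
  proof
    show "evens s' \<subseteq> evens s \<union> Z"
    proof
      fix u assume "u \<in> evens s'"
      then have "u \<in> B' \<or> u \<in> \<Union>(blos s - Q)" by (simp add: evens_def bl)
      then show "u \<in> evens s \<union> Z"
      proof
        assume "u \<in> B'"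
        then obtain K where K: "K \<in> Q" "u \<in> K" unfolding B'_def by blast
        have "K \<in> blos s \<or> (\<exists>w \<in> odds s. K = {w})" using Qn[OF K(1)] by (auto simp: nodes_def)
        then show ?thesis
        proof
          assume "K \<in> blos s" then show ?thesis using K(2) by (auto simp: evens_def)
        next
          assume "\<exists>w \<in> odds s. K = {w}"
          then obtain w where "w \<in> odds s" "K = {w}" by blast
          then show ?thesis using K Zodd by auto
        qed
      next
        assume "u \<in> \<Union>(blos s - Q)" then show ?thesis by (auto simp: evens_def)
      qed
    qed
    show "evens s \<union> Z \<subseteq> evens s'"
    proof
      fix u assume "u \<in> evens s \<union> Z"
      then show "u \<in> evens s'"
      proof
        assume "u \<in> evens s"
        then obtain K where K: "K \<in> blos s" "u \<in> K" by (auto simp: evens_def)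
        show ?thesis
        proof (cases "K \<in> Q")
          case True then have "u \<in> B'" using K B'_def by blast
          then show ?thesis by (simp add: evens_def bl)
        next
          case False then show ?thesis using K by (auto simp: evens_def bl)
        qed
      next
        assume "u \<in> Z" then have "u \<in> B'" using Zsub by blast
        then show ?thesis by (simp add: evens_def bl)
      qed
    qed
  qed
  have Zo: "Z \<subseteq> odds s" using Zodd by blast
  have iS: "\<And>u. inS s' u \<longleftrightarrow> inS s u" unfolding inS_def evs od using Zo by blast
  have B'b: "B' \<in> blos s'" using bl by simp
  have rpB': "rep s' B' = b" using B'b ba b_def by (simp add: rep_def)
  have rpo: "\<And>N. N \<in> nodes s \<Longrightarrow> N \<notin> Q \<Longrightarrow> rep s' N = rep s N"
  proof -
    fix N assume N: "N \<in> nodes s" "N \<notin> Q"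
    have "N \<noteq> B'" using outQ2[OF N] .
    then have "N \<in> blos s' \<longleftrightarrow> N \<in> blos s" using N(2) bl by auto
    then show "rep s' N = rep s N" using \<open>N \<noteq> B'\<close> ba by (simp add: rep_def)
  qed
  have cpo: "\<And>u. u \<notin> Z \<Longrightarrow> cp s' u = cp s u" using cpe Z_def by auto
  have lco: "\<And>u. u \<notin> Z \<Longrightarrow> lcp s' u = lcp s u" using lce by auto
  have paB': "par s' B' = par s B" using pa by simp
  have pao: "\<And>N. N \<notin> Q \<Longrightarrow> N \<noteq> B' \<Longrightarrow> par s' N = map_option (\<lambda>P. if P \<in> Q then B' else P) (par s N)"
    using pa by simp
  have parB: "\<And>P. par s B = Some P \<Longrightarrow> P \<notin> Q \<and> P \<in> nodes s"
  proof
    fix P assume p: "par s B = Some P"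
    show "P \<in> nodes s" using i_par[OF I Bn p] .
    show "P \<notin> Q"
    proof
      assume "P \<in> Q"
      then have "anc s P B" using QB by blast
      moreover have BP: "(B, P) \<in> R s" using Bn p by (simp add: R_def)
      then have "anc s B P" using anc_step[OF _ anc_refl] by blast
      ultimately have "P = B" using anc_antisym[OF I] by blast
      then show False using BP R_irrefl[OF I] by simp
    qed
  qed
  have oddchild: "\<And>N w. N \<in> nodes s \<Longrightarrow> par s N = Some {w} \<Longrightarrow> w \<in> odds s \<Longrightarrow> {w} \<in> Q \<Longrightarrow> N \<in> Q"
  proof -
    fix N w assume N: "N \<in> nodes s" and p: "par s N = Some {w}" and w: "w \<in> odds s" and wQ: "{w} \<in> Q"
    have key: "\<And>Bz. Bz \<in> blos s \<Longrightarrow> anc s Bz {w} \<Longrightarrow> anc s {w} B \<Longrightarrow> anc s Bz N \<and> anc s N B"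
    proof -
      fix Bz assume Bz: "Bz \<in> blos s" and a1: "anc s Bz {w}" and a2: "anc s {w} B"
      have "Bz \<noteq> {w}" using Bz odd_not_blos[OF I w] by blast
      then have "(Bz, {w}) \<in> (R s)\<^sup>+" using a1 unfolding anc_R rtrancl_eq_or_trancl by blast
      then obtain C where C: "(Bz, C) \<in> (R s)\<^sup>*" "(C, {w}) \<in> R s" by (blast dest: tranclD2)
      have "C = N" using i_uniq[OF I w] R_nodes[OF I C(2)] N p by blast
      then show "anc s Bz N \<and> anc s N B" using C anc_step[OF C(2) a2] by (simp add: anc_R)
    qed
    show "N \<in> Q"
    proof (cases "{w} \<in> Px")
      case True
      then have "anc s Bx {w}" "anc s {w} B" unfolding Px_def by blast+
      then show ?thesis using key[OF Bx] unfolding Q_def Px_def by blast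
    next
      case False
      then have "{w} \<in> Py" using wQ Q_def by blast
      then have "anc s By {w}" "anc s {w} B" unfolding Py_def by blast+
      then show ?thesis using key[OF By] unfolding Q_def Py_def by blast
    qed
  qed
  have xev: "x \<in> evens s" and yev: "y \<in> evens s" using x y Bx By by (auto simp: evens_def)
  have xS: "inS s x" and yS: "inS s y" using xev yev by (simp_all add: inS_def)
  have PxB': "\<Union>{K. anc s Bx K \<and> anc s K B} \<subseteq> B'" unfolding B'_def Q_def Px_def by blast
  have PyB': "\<Union>{K. anc s By K \<and> anc s K B} \<subseteq> B'" unfolding B'_def Q_def Py_def by blast
  have zy: "\<And>z. z \<in> Zy \<Longrightarrow> \<exists>r. cp s y = cp s z @ r \<and> dropWhile (\<lambda>w. w \<noteq> z) (cp s y) = z # r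
           \<and> distinct (cp s x @ rev (z # r)) \<and> set (z # r) \<subseteq> B'"
  proof -
    fix z assume "z \<in> Zy"
    then have z: "z \<in> odds s" "anc s By {z}" "anc s {z} B" unfolding Zy_def Py_def by blast+
    show "?thesis z" using side[OF I Bx By x y ax ay lca Bb z] PyB' by blast
  qed
  have zx: "\<And>z. z \<in> Zx \<Longrightarrow> \<exists>r. cp s x = cp s z @ r \<and> dropWhile (\<lambda>w. w \<noteq> z) (cp s x) = z # r
           \<and> distinct (cp s y @ rev (z # r)) \<and> set (z # r) \<subseteq> B'"
  proof -
    fix z assume "z \<in> Zx"
    then have z: "z \<in> odds s" "anc s Bx {z}" "anc s {z} B" unfolding Zx_def Px_def by blast+
    show "?thesis z" using side[OF I By Bx y x ay ax lca' Bb z] PxB' by blast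
  qed
  have cpZy: "\<And>z. z \<in> Zy \<Longrightarrow> cp s' z = cp s x @ rev (dropWhile (\<lambda>w. w \<noteq> z) (cp s y))"
    using cpe by simp
  have cpZx: "\<And>z. z \<in> Zx \<Longrightarrow> cp s' z = cp s y @ rev (dropWhile (\<lambda>w. w \<noteq> z) (cp s x))"
    using cpe ZxZy by simp
  have ZZ: "\<And>z. z \<in> Z \<Longrightarrow> z \<in> Zx \<or> z \<in> Zy" using Z_def by blast
  have cpb: "cp s' b = cp s b" using cpo bZ by simp
  have pinv': "pinv M s'"
  proof (rule invI)
    show "J_mate M s'" unfolding J_mate_def iS using i_mate[OF I] by blast
    show "J_bdisj s'" unfolding J_bdisj_def bl
    proof (intro ballI impI)
      fix N K assume N: "N \<in> insert B' (blos s - Q)" and K: "K \<in> insert B' (blos s - Q)" and ne: "N \<noteq> K"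
      have o: "\<And>L. L \<in> blos s - Q \<Longrightarrow> L \<inter> B' = {}" using outQ by (auto simp: nodes_def)
      show "N \<inter> K = {}"
      proof (cases "N = B'")
        case True then show ?thesis using K ne o by blast
      next
        case False
        show ?thesis
        proof (cases "K = B'")
          case True then show ?thesis using N False o by blast
        next
          case False2: False
          then show ?thesis using N K ne False i_bdisj[OF I] by blast
        qed
      qed
    qed
    show "J_eo s'" unfolding J_eo_def evs od using i_eo[OF I] by blast
    show "J_base s'" unfolding J_base_def bl
    proof
      fix N assume N: "N \<in> insert B' (blos s - Q)"
      show "base s' N \<in> N"
      proof (cases "N = B'")
        case True then show ?thesis using ba bB BB' b_def by auto
      next
        case False
        then have "N \<in> blos s" using N by blast
        then show ?thesis using ba False i_base[OF I] by simp
      qed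
    qed
    show "J_par s'" unfolding J_par_def nd
    proof (intro ballI allI impI)
      fix N P assume N: "N \<in> insert B' (nodes s - Q)" and p: "par s' N = Some P"
      show "P \<in> insert B' (nodes s - Q)"
      proof (cases "N = B'")
        case True
        then have "par s B = Some P" using paB' p by simp
        then show ?thesis using parB by blast
      next
        case False
        then have N': "N \<in> nodes s" "N \<notin> Q" using N by auto
        obtain P0 where P0: "par s N = Some P0" "P = (if P0 \<in> Q then B' else P0)"
          using p pao[OF N'(2) False] by auto
        have "P0 \<in> nodes s" using i_par[OF I N'(1) P0(1)] .
        then show ?thesis using P0(2) by auto
      qed
    qed
    show "J_root s'" unfolding J_root_def nd
    proof (intro ballI impI)
      fix N assume N: "N \<in> insert B' (nodes s - Q)" and p: "par s' N = None"
      show "cp s' (rep s' N) = [rep s' N]"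
      proof (cases "N = B'")
        case True
        then have "par s B = None" using paB' p by simp
        then have "cp s b = [b]" using i_root[OF I Bn] rB by simp
        then show ?thesis using True rpB' cpb by simp
      next
        case False
        then have N': "N \<in> nodes s" "N \<notin> Q" using N by auto
        have "par s N = None" using p pao[OF N'(2) False] by simp
        then have "cp s (rep s N) = [rep s N]" using i_root[OF I N'(1)] by simp
        moreover have "rep s N \<notin> Z" using outZ[OF N' rep_in[OF I N'(1)]] .
        ultimately show ?thesis using rpo[OF N'] cpo by simp
      qed
    qed
    show "J_child s'" unfolding J_child_def nd
    proof (intro ballI allI impI)
      fix N P assume N: "N \<in> insert B' (nodes s - Q)" and p: "par s' N = Some P"
      show "\<exists>v\<in>P. cp s' (rep s' N) = cp s' v @ [rep s' N]"
      proof (cases "N = B'")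
        case True
        then have pB: "par s B = Some P" using paB' p by simp
        then have PQ: "P \<notin> Q" and Pn: "P \<in> nodes s" using parB by auto
        obtain v where v: "v \<in> P" "cp s b = cp s v @ [b]" using i_child[OF I Bn pB] rB by auto
        have "v \<notin> Z" using outZ[OF Pn PQ v(1)] .
        then have "cp s' (rep s' N) = cp s' v @ [rep s' N]" using v True rpB' cpb cpo by simp
        then show ?thesis using v(1) by blast
      next
        case False
        then have N': "N \<in> nodes s" "N \<notin> Q" using N by auto
        obtain P0 where P0: "par s N = Some P0" "P = (if P0 \<in> Q then B' else P0)"
          using p pao[OF N'(2) False] by auto
        have P0n: "P0 \<in> nodes s" using i_par[OF I N'(1) P0(1)] .
        obtain v where v: "v \<in> P0" "cp s (rep s N) = cp s v @ [rep s N]" using i_child[OF I N'(1) P0(1)] by auto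
        have rN: "rep s N \<notin> Z" using outZ[OF N' rep_in[OF I N'(1)]] .
        have vP: "v \<in> P \<and> v \<notin> Z"
        proof (cases "P0 \<in> Q")
          case True
          have "P0 \<in> blos s"
          proof (rule ccontr)
            assume "P0 \<notin> blos s"
            then obtain w where w: "w \<in> odds s" "P0 = {w}" using P0n by (auto simp: nodes_def)
            then have "N \<in> Q" using oddchild[OF N'(1) _ w(1)] P0(1) True by blast
            then show False using N'(2) by simp
          qed
          then have "v \<in> evens s" using v(1) by (auto simp: evens_def)
          then have "v \<notin> Z" using Zo i_eo[OF I] by blast
          moreover have "v \<in> B'" using v(1) True B'_def by blast
          ultimately show ?thesis using P0(2) True by simp
        next
          case False
          then show ?thesis using P0(2) v(1) outZ[OF P0n False v(1)] by simp
        qed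
        then have "cp s' (rep s' N) = cp s' v @ [rep s' N]" using v rN rpo[OF N'] cpo by simp
        then show ?thesis using vP by blast
      qed
    qed
    show "J_in s'" unfolding J_in_def nd
    proof (intro ballI)
      fix N u assume N: "N \<in> insert B' (nodes s - Q)" and u: "u \<in> N"
      show "\<exists>r. cp s' u = cp s' (rep s' N) @ r \<and> set r \<subseteq> N"
      proof (cases "N = B'")
        case NB: True
        obtain rx where rx: "cp s x = cp s b @ rx" "set rx \<subseteq> B'"
          using anc_prefix[OF I ax Bxn x] rB PxB' by blast
        obtain ry where ry: "cp s y = cp s b @ ry" "set ry \<subseteq> B'"
          using anc_prefix[OF I ay Byn y] rB PyB' by blast
        have "\<exists>r. cp s' u = cp s b @ r \<and> set r \<subseteq> B'"
        proof (cases "u \<in> Z")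
          case True
          then consider "u \<in> Zy" | "u \<in> Zx" using ZZ by blast
          then show ?thesis
          proof cases
            case 1
            obtain r where r: "dropWhile (\<lambda>w. w \<noteq> u) (cp s y) = u # r" "set (u # r) \<subseteq> B'"
              using zy[OF 1] by blast
            have "cp s' u = cp s b @ (rx @ rev (u # r))" using cpZy[OF 1] r(1) rx(1) by simp
            moreover have "set (rx @ rev (u # r)) \<subseteq> B'" using rx(2) r(2) by simp
            ultimately show ?thesis by blast
          next
            case 2
            obtain r where r: "dropWhile (\<lambda>w. w \<noteq> u) (cp s x) = u # r" "set (u # r) \<subseteq> B'"
              using zx[OF 2] by blast
            have "cp s' u = cp s b @ (ry @ rev (u # r))" using cpZx[OF 2] r(1) ry(1) by simp
            moreover have "set (ry @ rev (u # r)) \<subseteq> B'" using ry(2) r(2) by simp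
            ultimately show ?thesis by blast
          qed
        next
          case False
          from u NB obtain K where K: "K \<in> Q" "u \<in> K" unfolding B'_def by blast
          obtain r where r: "cp s u = cp s b @ r" "set r \<subseteq> \<Union>{K'. anc s K K' \<and> anc s K' B}"
            using anc_prefix[OF I QB[OF K(1)] Qn[OF K(1)] K(2)] rB by auto
          have "\<Union>{K'. anc s K K' \<and> anc s K' B} \<subseteq> B'"
          proof
            fix w assume "w \<in> \<Union>{K'. anc s K K' \<and> anc s K' B}"
            then obtain K' where K': "w \<in> K'" "anc s K K'" "anc s K' B" by blast
            have "K' \<in> Q"
            proof (cases "K \<in> Px")
              case True
              then have "anc s Bx K" unfolding Px_def by blast
              then have "anc s Bx K'" using anc_trans[OF I _ K'(2)] by blast
              then show ?thesis using K'(3) unfolding Q_def Px_def by blast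
            next
              case False
              then have "K \<in> Py" using K(1) Q_def by blast
              then have "anc s By K" unfolding Py_def by blast
              then have "anc s By K'" using anc_trans[OF I _ K'(2)] by blast
              then show ?thesis using K'(3) unfolding Q_def Py_def by blast
            qed
            then show "w \<in> B'" using K'(1) B'_def by blast
          qed
          then have "set r \<subseteq> B'" using r(2) by (rule_tac subset_trans)
          moreover have "cp s' u = cp s b @ r" using r(1) cpo[OF False] by simp
          ultimately show ?thesis by blast
        qed
        then show ?thesis using NB rpB' cpb by simp
      next
        case False
        then have N': "N \<in> nodes s" "N \<notin> Q" using N by auto
        obtain r where r: "cp s u = cp s (rep s N) @ r" "set r \<subseteq> N" using i_in[OF I N'(1) u] by blast
        have "rep s N \<notin> Z" using outZ[OF N' rep_in[OF I N'(1)]] .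
        moreover have "u \<notin> Z" using outZ[OF N' u] .
        ultimately show ?thesis using r rpo[OF N'] cpo by simp
      qed
    qed
    show "J_lcp s'" unfolding J_lcp_def evs
    proof
      fix u assume u: "u \<in> evens s \<union> Z"
      show "lcp s' u = int (length (cp s' u)) - 1"
      proof (cases "u \<in> Z")
        case True
        have uo: "u \<in> odds s" using True Zo by blast
        have lx: "lcp s x = int (length (cp s x)) - 1" using i_lcp[OF I xev] .
        have ly: "lcp s y = int (length (cp s y)) - 1" using i_lcp[OF I yev] .
        have lu: "lcpo s u = int (length (cp s u)) - 1" using i_lcpo[OF I uo] .
        have le: "lcp s' u = lcp s x + 1 + lcp s y - lcpo s u" using lce True by simp
        consider "u \<in> Zy" | "u \<in> Zx" using ZZ True by blast
        then show ?thesis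
        proof cases
          case 1
          obtain r where r: "cp s y = cp s u @ r" "dropWhile (\<lambda>w. w \<noteq> u) (cp s y) = u # r"
            using zy[OF 1] by blast
          have "length (cp s' u) = length (cp s x) + 1 + length r" using cpZy[OF 1] r(2) by simp
          moreover have "length (cp s y) = length (cp s u) + length r" using r(1) by simp
          ultimately show ?thesis using le lx ly lu by simp
        next
          case 2
          obtain r where r: "cp s x = cp s u @ r" "dropWhile (\<lambda>w. w \<noteq> u) (cp s x) = u # r"
            using zx[OF 2] by blast
          have "length (cp s' u) = length (cp s y) + 1 + length r" using cpZx[OF 2] r(2) by simp
          moreover have "length (cp s x) = length (cp s u) + length r" using r(1) by simp
          ultimately show ?thesis using le lx ly lu by simp
        qed
      next
        case False
        then have "u \<in> evens s" using u by blast
        then show ?thesis using i_lcp[OF I] lco[OF False] cpo[OF False] by simp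
      qed
    qed
    show "J_lcpo s'" unfolding J_lcpo_def od lcoe using i_lcpo[OF I] cpo by simp
    show "J_dist s'" unfolding J_dist_def iS
    proof (intro allI impI)
      fix u assume uS: "inS s u"
      show "distinct (cp s' u) \<and> set (cp s' u) \<subseteq> {w. inS s w}"
      proof (cases "u \<in> Z")
        case True
        have sx: "set (cp s x) \<subseteq> {w. inS s w}" and sy: "set (cp s y) \<subseteq> {w. inS s w}"
          using i_set[OF I xS] i_set[OF I yS] by auto
        consider "u \<in> Zy" | "u \<in> Zx" using ZZ True by blast
        then show ?thesis
        proof cases
          case 1
          obtain r where r: "dropWhile (\<lambda>w. w \<noteq> u) (cp s y) = u # r" "distinct (cp s x @ rev (u # r))"
            using zy[OF 1] by blast
          have "set (dropWhile (\<lambda>w. w \<noteq> u) (cp s y)) \<subseteq> set (cp s y)" by (auto dest: set_dropWhileD)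
          then have "set (u # r) \<subseteq> set (cp s y)" using r(1) by simp
          then show ?thesis using cpZy[OF 1] r sx sy by auto
        next
          case 2
          obtain r where r: "dropWhile (\<lambda>w. w \<noteq> u) (cp s x) = u # r" "distinct (cp s y @ rev (u # r))"
            using zx[OF 2] by blast
          have "set (dropWhile (\<lambda>w. w \<noteq> u) (cp s x)) \<subseteq> set (cp s x)" by (auto dest: set_dropWhileD)
          then have "set (u # r) \<subseteq> set (cp s x)" using r(1) by simp
          then show ?thesis using cpZx[OF 2] r sx sy by auto
        qed
      next
        case False
        then show ?thesis using cpo i_dist[OF I uS] i_set[OF I uS] by simp
      qed
    qed
    show "J_uniq s'" unfolding J_uniq_def nd od
    proof (intro ballI impI)
      fix w N N' assume w: "w \<in> odds s - Z"
        and N: "N \<in> insert B' (nodes s - Q)" and N': "N' \<in> insert B' (nodes s - Q)"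
        and p: "par s' N = Some {w}" and p': "par s' N' = Some {w}"
      have B'w: "B' \<noteq> {w}"
      proof
        assume "B' = {w}"
        then have "b = w" using bB BB' by blast
        then show False using bev w i_eo[OF I] by blast
      qed
      have bk: "\<And>K. K \<in> insert B' (nodes s - Q) \<Longrightarrow> par s' K = Some {w} \<Longrightarrow>
          (if K = B' then B else K) \<in> nodes s \<and> par s (if K = B' then B else K) = Some {w}"
      proof -
        fix K assume K: "K \<in> insert B' (nodes s - Q)" and pK: "par s' K = Some {w}"
        show "(if K = B' then B else K) \<in> nodes s \<and> par s (if K = B' then B else K) = Some {w}"
        proof (cases "K = B'")
          case True then show ?thesis using Bn pK paB' by simp
        next
          case False
          then have K': "K \<in> nodes s" "K \<notin> Q" using K by auto
          obtain P0 where P0: "par s K = Some P0" "{w} = (if P0 \<in> Q then B' else P0)"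
            using pK pao[OF K'(2) False] by auto
          then have "P0 = {w}" using B'w by (auto split: if_splits)
          then show ?thesis using False K' P0 by simp
        qed
      qed
      have eq: "(if N = B' then B else N) = (if N' = B' then B else N')"
        using bk[OF N p] bk[OF N' p'] i_uniq[OF I] w by blast
      show "N = N'"
      proof (cases "N = B'")
        case True
        show ?thesis
        proof (rule ccontr)
          assume "N \<noteq> N'"
          then have "N' \<noteq> B'" using True by simp
          then have "N' = B" using eq True by simp
          then show False using N' \<open>N' \<noteq> B'\<close> BQ by auto
        qed
      next
        case False
        show ?thesis
        proof (cases "N' = B'")
          case True
          then have "N = B" using eq False by simp
          then show ?thesis using N False BQ by auto
        next
          case False2: False
          then show ?thesis using eq False by simp
        qed
      qed
    qed
  qed
  then show ?thesis using s'_def by simp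
qed



lemma reach_inv:
  assumes gm: "graph_matching V E M" and r: "reach V E M s"
  shows "pinv M s"
  using r
proof (induction rule: reach.induct)
  case reach_init
  then show ?case by (rule inv_init)
next
  case (reach_grow s s')
  then show ?case using inv_grow[OF gm] by blast
next
  case (reach_bridge s s')
  then obtain x y Bx By B where "bridge_edge E M s x y Bx By" "anc s Bx B" "anc s By B"
    "\<forall>C. anc s Bx C \<and> anc s By C \<longrightarrow> anc s B C" "s' = merge s x y Bx By B"
    unfolding bridge_step_def by blast
  then show ?case using inv_merge[OF reach_bridge(3)] by blast
next
  case (reach_end_growth s s')
  then show ?case using inv_end_growth by blast
next
  case (reach_end_phase s s')
  then show ?case using inv_end_phase by blast
qed

theorem lemma1:
  fixes V :: "'v set" and E M :: "'v set set" and s :: "'v pstate" and B :: "'v set" and v :: 'v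
  assumes "graph_matching V E M"
    and "reach V E M s"
    and "B \<in> blos s"
    and "v \<in> B"
  shows "base s B \<in> set (cp s v)
    \<and> int (length (dropWhile (\<lambda>w. w \<noteq> base s B) (cp s v))) - 1 = lcp s v - lcp s (base s B)"
proof -
  have I: "pinv M s" using reach_inv[OF assms(1,2)] .
  have Bn: "B \<in> nodes s" using assms(3) by (simp add: nodes_def)
  define b where "b = base s B"
  have rB: "rep s B = b" using assms(3) b_def by (simp add: rep_def)
  obtain r where r: "cp s v = cp s b @ r" using i_in[OF I Bn assms(4)] rB by auto
  obtain p where p: "cp s b = p @ [b]" using cp_rep_last[OF I Bn] rB by auto
  have vev: "v \<in> evens s" using assms(3,4) by (auto simp: evens_def)
  have bev: "b \<in> evens s" using i_base[OF I assms(3)] assms(3) b_def by (auto simp: evens_def)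
  have "distinct (cp s v)" using i_dist[OF I] vev by (simp add: inS_def)
  then have bp: "b \<notin> set p" using r p by simp
  have cv: "cp s v = p @ b # r" using r p by simp
  have dw: "dropWhile (\<lambda>w. w \<noteq> b) (cp s v) = b # r"
    unfolding cv using bp by (subst dropWhile_append2[of p]) auto
  have "lcp s v = int (length (cp s v)) - 1" using i_lcp[OF I vev] .
  moreover have "lcp s b = int (length (cp s b)) - 1" using i_lcp[OF I bev] .
  ultimately have "int (length (dropWhile (\<lambda>w. w \<noteq> b) (cp s v))) - 1 = lcp s v - lcp s b"
    using dw cv p by simp
  moreover have "b \<in> set (cp s v)" using cv by simp
  ultimately show ?thesis using b_def by simp
qed

end
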